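(* Let $\mathcal{X}=\{A\in\mathcal{M}_d: A=A^\dagger,\ \operatorname{tr}A=0\}$ as a real vector space, let $\mathcal{V}=\{A\mapsto UAU^\dagger: U\in\mathcal{M}_d\text{ unitary}\}$ regarded as real-linear maps on $\mathcal{X}$, and let $\mathrm{zerospan}_{\mathbb{R}}\mathcal{V}=\{\sum_i\lambda_iV_i:\ V_i\in\mathcal{V},\ \lambda_i\in\mathbb{R},\ \sum_i\lambda_i=0\}$ (finite sums). Then $\mathrm{zerospan}_{\mathbb{R}}\mathcal{V}=\mathcal{B}(\mathcal{X})$, the space of all real-linear maps $\mathcal{X}\to\mathcal{X}$. *)

theory Defs
  imports "HOL-Analysis.Analysis"
begin

definition cdagger :: "complex^'d^'d \<Rightarrow> complex^'d^'d" where
  "cdagger A = (\<chi> i j. cnj (A $ j $ i))"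

definition unitary_mat :: "complex^'d^'d \<Rightarrow> bool" where
  "unitary_mat U \<longleftrightarrow> U ** cdagger U = mat 1 \<and> cdagger U ** U = mat 1"

definition tlherm :: "(complex^'d^'d) set" where
  "tlherm = {A. A = cdagger A \<and> trace A = 0}"

text \<open>B(X): real-linear maps X to X, represented extensionally
  (as functions on all matrices that vanish outside X).\<close>
definition realLinMaps :: "((complex^'d^'d) \<Rightarrow> (complex^'d^'d)) set" where
  "realLinMaps = {L.
     (\<forall>A\<in>tlherm. L A \<in> tlherm) \<and>
     (\<forall>A\<in>tlherm. \<forall>B\<in>tlherm. L (A + B) = L A + L B) \<and>
     (\<forall>c::real. \<forall>A\<in>tlherm. L (c *\<^sub>R A) = c *\<^sub>R L A) \<and>
     (\<forall>A. A \<notin> tlherm \<longrightarrow> L A = 0)}"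

definition zerospanConj :: "((complex^'d^'d) \<Rightarrow> (complex^'d^'d)) set" where
  "zerospanConj = {(\<lambda>A. if A \<in> tlherm
        then (\<Sum>i<n. lam i *\<^sub>R (U i ** A ** cdagger (U i))) else 0)
      | n (lam :: nat \<Rightarrow> real) U.
        (\<forall>i<n. unitary_mat (U i)) \<and> (\<Sum>i<n. lam i) = 0}"

end

theory Submission
  imports Defs
begin


lemma cdagger_mult: "cdagger (A ** B) = cdagger B ** (cdagger A :: complex^'d^'d)"
  by (simp add: cdagger_def matrix_matrix_mult_def vec_eq_iff mult.commute)

lemma matrix_add_rdistrib: "((B + C) ** A) = (B ** A) + (C ** A)"
  by (vector matrix_matrix_mult_def sum.distrib[symmetric] field_simps)

lemma cdagger_cdagger[simp]: "cdagger (cdagger A) = A"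
  by (simp add: cdagger_def vec_eq_iff)

lemma cdagger_add: "cdagger (A + B) = cdagger A + cdagger B"
  by (simp add: cdagger_def vec_eq_iff)

lemma cdagger_scaleR: "cdagger (c *\<^sub>R A) = c *\<^sub>R cdagger A"
  by (simp add: cdagger_def vec_eq_iff)

lemma cdagger_entry[simp]: "cdagger A $ i $ j = cnj (A $ j $ i)"
  by (simp add: cdagger_def)

lemma conj_entry: "(U ** A ** cdagger U) $ i $ j = (\<Sum>k\<in>UNIV. \<Sum>l\<in>UNIV. U$i$k * A$k$l * cnj (U$j$l))"
  by (simp add: matrix_matrix_mult_def sum_distrib_left sum_distrib_right mult.assoc)
     (rule sum.swap)

lemma herm_entry: "A \<in> tlherm \<Longrightarrow> A $ i $ j = cnj (A $ j $ i)"
  unfolding tlherm_def by (metis (mono_tags) cdagger_entry mem_Collect_eq)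

lemma tlherm_conj:
  assumes U: "unitary_mat U" and A: "A \<in> tlherm"
  shows "U ** A ** cdagger U \<in> tlherm"
proof -
  have h: "A = cdagger A" "trace A = 0" using A by (auto simp: tlherm_def)
  have "cdagger (U ** A ** cdagger U) = U ** A ** cdagger U"
    using h(1) by (simp add: cdagger_mult matrix_mul_assoc)
  moreover have "trace (U ** A ** cdagger U) = trace A"
  proof -
    have "trace (U ** A ** cdagger U) = trace (cdagger U ** (U ** A))"
      by (rule trace_mul_sym)
    also have "\<dots> = trace A" using U by (simp add: matrix_mul_assoc unitary_mat_def)
    finally show ?thesis .
  qed
  ultimately show ?thesis using h by (simp add: tlherm_def)
qed

lemma tlherm_add: "A \<in> tlherm \<Longrightarrow> B \<in> tlherm \<Longrightarrow> A + B \<in> tlherm"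
  by (simp add: tlherm_def cdagger_add trace_add)

lemma trace_scaleR: "trace (c *\<^sub>R (A::complex^'d^'d)) = c *\<^sub>R trace A"
  by (simp add: trace_def scaleR_sum_right)

lemma tlherm_scaleR: "A \<in> tlherm \<Longrightarrow> c *\<^sub>R A \<in> tlherm"
  by (simp add: tlherm_def cdagger_scaleR trace_scaleR)

lemma tlherm_zero: "0 \<in> tlherm"
  by (simp add: tlherm_def cdagger_def vec_eq_iff trace_def)

lemma tlherm_sum: "finite I \<Longrightarrow> (\<And>i. i \<in> I \<Longrightarrow> f i \<in> tlherm) \<Longrightarrow> sum f I \<in> tlherm"
  by (induction I rule: finite_induct) (auto intro: tlherm_add tlherm_zero)

lemma sub1: "(zerospanConj :: ((complex^'d^'d) \<Rightarrow> (complex^'d^'d)) set) \<subseteq> realLinMaps"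
proof
  fix L :: "complex^'d^'d \<Rightarrow> complex^'d^'d"
  assume "L \<in> zerospanConj"
  then obtain n :: nat and lam :: "nat \<Rightarrow> real" and U where L: "L = (\<lambda>A. if A \<in> tlherm
        then (\<Sum>i<n. lam i *\<^sub>R (U i ** A ** cdagger (U i))) else 0)"
    and U: "\<forall>i<n. unitary_mat (U i)" unfolding zerospanConj_def by blast
  show "L \<in> realLinMaps" unfolding realLinMaps_def
  proof (intro CollectI conjI ballI allI impI)
    fix A :: "complex^'d^'d" assume "A \<in> tlherm" then show "L A \<in> tlherm"
      using U by (auto simp: L intro!: tlherm_sum tlherm_scaleR tlherm_conj)
  next
    fix A B :: "complex^'d^'d" assume "A \<in> tlherm" "B \<in> tlherm"
    then show "L (A + B) = L A + L B"
      by (simp add: L tlherm_add matrix_add_ldistrib matrix_add_rdistrib scaleR_add_right sum.distrib)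
  next
    fix c :: real and A :: "complex^'d^'d" assume "A \<in> tlherm"
    then show "L (c *\<^sub>R A) = c *\<^sub>R L A"
      by (simp add: L tlherm_scaleR matrix_scalar_ac scalar_matrix_assoc[symmetric] scaleR_sum_right mult.commute)
  next
    fix A :: "complex^'d^'d" assume "A \<notin> tlherm" then show "L A = 0" by (simp add: L)
  qed
qed

lemma sum_lessThan_add_nat: "(\<Sum>i<a+b. h i) = (\<Sum>i<a. h i) + (\<Sum>i<b. h (a+i))" for h :: "nat \<Rightarrow> 'b::comm_monoid_add"
  by (induction b) (simp_all add: add.assoc)

lemma matrix_sum_left: "finite I \<Longrightarrow> (W::'a::semiring_1^'n^'n) ** sum f I = (\<Sum>i\<in>I. W ** f i)"
  by (induction I rule: finite_induct) (simp_all add: matrix_add_ldistrib)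

lemma matrix_sum_right: "finite I \<Longrightarrow> sum f I ** (W::'a::semiring_1^'n^'n) = (\<Sum>i\<in>I. f i ** W)"
  by (induction I rule: finite_induct) (simp_all add: matrix_add_rdistrib)

lemma unitary_mult: "unitary_mat U \<Longrightarrow> unitary_mat W \<Longrightarrow> unitary_mat (U ** W)"
  unfolding unitary_mat_def cdagger_mult
  by (metis matrix_mul_assoc matrix_mul_lid)

lemma zs_intro:
  fixes n :: nat and lam :: "nat \<Rightarrow> real" and f :: "complex^'d^'d \<Rightarrow> complex^'d^'d"
  assumes "\<forall>i<n. unitary_mat (U i)" "(\<Sum>i<n. lam i) = 0"
    and "\<And>A. A \<in> tlherm \<Longrightarrow> f A = (\<Sum>i<n. lam i *\<^sub>R (U i ** A ** cdagger (U i)))"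
    and "\<And>A. A \<notin> tlherm \<Longrightarrow> f A = 0"
  shows "f \<in> zerospanConj"
proof -
  have "f = (\<lambda>A. if A \<in> tlherm then (\<Sum>i<n. lam i *\<^sub>R (U i ** A ** cdagger (U i))) else 0)"
    using assms(3,4) by auto
  then show ?thesis using assms(1,2) unfolding zerospanConj_def by blast
qed

lemma zs_elim:
  fixes f :: "complex^'d^'d \<Rightarrow> complex^'d^'d"
  assumes "f \<in> zerospanConj"
  obtains n :: nat and lam :: "nat \<Rightarrow> real" and U where "\<forall>i<n. unitary_mat (U i)" "(\<Sum>i<n. lam i) = 0"
    "\<And>A. A \<in> tlherm \<Longrightarrow> f A = (\<Sum>i<n. lam i *\<^sub>R (U i ** A ** cdagger (U i)))"
    "\<And>A. A \<notin> tlherm \<Longrightarrow> f A = 0"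
  using assms unfolding zerospanConj_def mem_Collect_eq
  apply (elim exE conjE)
  subgoal for n lam U by (rule that[of n U lam]) auto
  done

lemma Z_zero: "(\<lambda>A. 0) \<in> zerospanConj"
  by (rule zs_intro[where n=0]) auto

lemma Z_add:
  assumes "f \<in> zerospanConj" "g \<in> zerospanConj"
  shows "(\<lambda>A. f A + g A) \<in> zerospanConj"
proof -
  obtain n1 :: nat and lam1 :: "nat \<Rightarrow> real" and U1 where 1: "\<forall>i<n1. unitary_mat (U1 i)" "(\<Sum>i<n1. lam1 i) = 0"
    "\<And>A. A \<in> tlherm \<Longrightarrow> f A = (\<Sum>i<n1. lam1 i *\<^sub>R (U1 i ** A ** cdagger (U1 i)))"
    "\<And>A. A \<notin> tlherm \<Longrightarrow> f A = 0" using assms(1) by (rule zs_elim) (rule that)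
  obtain n2 :: nat and lam2 :: "nat \<Rightarrow> real" and U2 where 2: "\<forall>i<n2. unitary_mat (U2 i)" "(\<Sum>i<n2. lam2 i) = 0"
    "\<And>A. A \<in> tlherm \<Longrightarrow> g A = (\<Sum>i<n2. lam2 i *\<^sub>R (U2 i ** A ** cdagger (U2 i)))"
    "\<And>A. A \<notin> tlherm \<Longrightarrow> g A = 0" using assms(2) by (rule zs_elim) (rule that)
  define lam where "lam i = (if i < n1 then lam1 i else lam2 (i - n1))" for i
  define U where "U i = (if i < n1 then U1 i else U2 (i - n1))" for i
  show ?thesis
  proof (rule zs_intro[where n="n1+n2" and lam=lam and U=U])
    show "\<forall>i<n1 + n2. unitary_mat (U i)" using 1(1) 2(1) by (auto simp: U_def)
    show "(\<Sum>i<n1+n2. lam i) = 0" using 1(2) 2(2) by (simp add: sum_lessThan_add_nat lam_def)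
    show "f A + g A = (\<Sum>i<n1+n2. lam i *\<^sub>R (U i ** A ** cdagger (U i)))" if "A \<in> tlherm" for A
      using that 1(3) 2(3) by (simp add: sum_lessThan_add_nat lam_def U_def)
    show "f A + g A = 0" if "A \<notin> tlherm" for A using that 1(4) 2(4) by simp
  qed
qed

lemma Z_scale:
  assumes "f \<in> zerospanConj"
  shows "(\<lambda>A. c *\<^sub>R f A) \<in> zerospanConj"
proof -
  obtain n :: nat and lam :: "nat \<Rightarrow> real" and U where 1: "\<forall>i<n. unitary_mat (U i)" "(\<Sum>i<n. lam i) = 0"
    "\<And>A. A \<in> tlherm \<Longrightarrow> f A = (\<Sum>i<n. lam i *\<^sub>R (U i ** A ** cdagger (U i)))"
    "\<And>A. A \<notin> tlherm \<Longrightarrow> f A = 0" using assms(1) by (rule zs_elim) (rule that)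
  show ?thesis
  proof (rule zs_intro[where n=n and lam="\<lambda>i. c * lam i" and U=U])
    show "(\<Sum>i<n. c * lam i) = 0" using 1(2) by (simp add: sum_distrib_left[symmetric])
  qed (use 1 in \<open>auto simp: scaleR_sum_right\<close>)
qed

lemma Z_sum:
  "finite I \<Longrightarrow> (\<And>i. i \<in> I \<Longrightarrow> f i \<in> zerospanConj) \<Longrightarrow> (\<lambda>A. \<Sum>i\<in>I. f i A) \<in> zerospanConj"
proof (induction I rule: finite_induct)
  case empty then show ?case using Z_zero by simp
next
  case (insert x F)
  then show ?case using Z_add[of "f x" "\<lambda>A. \<Sum>i\<in>F. f i A"] by simp
qed

lemma Z_left:
  assumes "f \<in> zerospanConj" "unitary_mat W"
  shows "(\<lambda>A. W ** f A ** cdagger W) \<in> zerospanConj"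
proof -
  obtain n :: nat and lam :: "nat \<Rightarrow> real" and U where 1: "\<forall>i<n. unitary_mat (U i)" "(\<Sum>i<n. lam i) = 0"
    "\<And>A. A \<in> tlherm \<Longrightarrow> f A = (\<Sum>i<n. lam i *\<^sub>R (U i ** A ** cdagger (U i)))"
    "\<And>A. A \<notin> tlherm \<Longrightarrow> f A = 0" using assms(1) by (rule zs_elim) (rule that)
  show ?thesis
  proof (rule zs_intro[where n=n and lam=lam and U="\<lambda>i. W ** U i"])
    show "\<forall>i<n. unitary_mat (W ** U i)" using 1(1) assms(2) by (auto intro: unitary_mult)
    show "W ** f A ** cdagger W = (\<Sum>i<n. lam i *\<^sub>R ((W ** U i) ** A ** cdagger (W ** U i)))"
      if "A \<in> tlherm" for A
      using that 1(3) by (simp add: matrix_sum_left matrix_sum_right matrix_scalar_ac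
          scalar_matrix_assoc[symmetric] cdagger_mult matrix_mul_assoc)
  qed (use 1 in auto)
qed

lemma Z_right:
  assumes "f \<in> zerospanConj" "unitary_mat W"
  shows "(\<lambda>A. if A \<in> tlherm then f (W ** A ** cdagger W) else 0) \<in> zerospanConj"
proof -
  obtain n :: nat and lam :: "nat \<Rightarrow> real" and U where 1: "\<forall>i<n. unitary_mat (U i)" "(\<Sum>i<n. lam i) = 0"
    "\<And>A. A \<in> tlherm \<Longrightarrow> f A = (\<Sum>i<n. lam i *\<^sub>R (U i ** A ** cdagger (U i)))"
    "\<And>A. A \<notin> tlherm \<Longrightarrow> f A = 0" using assms(1) by (rule zs_elim) (rule that)
  show ?thesis
  proof (rule zs_intro[where n=n and lam=lam and U="\<lambda>i. U i ** W"])
    show "\<forall>i<n. unitary_mat (U i ** W)" using 1(1) assms(2) by (auto intro: unitary_mult)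
    show "(if A \<in> tlherm then f (W ** A ** cdagger W) else 0) = (\<Sum>i<n. lam i *\<^sub>R ((U i ** W) ** A ** cdagger (U i ** W)))"
      if "A \<in> tlherm" for A
      using that 1(3) tlherm_conj[OF assms(2) that] by (simp add: cdagger_mult matrix_mul_assoc)
  qed (use 1 in auto)
qed

definition rk :: "(complex^'d^'d \<Rightarrow> real) \<Rightarrow> complex^'d^'d \<Rightarrow> (complex^'d^'d \<Rightarrow> complex^'d^'d)" where
  "rk \<phi> B = (\<lambda>A. if A \<in> tlherm then \<phi> A *\<^sub>R B else 0)"

lemma rk_left:
  assumes "rk \<phi> B \<in> zerospanConj" "unitary_mat W"
  shows "rk \<phi> (W ** B ** cdagger W) \<in> zerospanConj"
proof -
  have "rk \<phi> (W ** B ** cdagger W) = (\<lambda>A. W ** rk \<phi> B A ** cdagger W)"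
    by (auto simp: rk_def fun_eq_iff matrix_scalar_ac scalar_matrix_assoc[symmetric])
  then show ?thesis using Z_left[OF assms] by simp
qed

lemma rk_right:
  assumes "rk \<phi> B \<in> zerospanConj" "unitary_mat W"
  shows "rk (\<lambda>A. \<phi> (W ** A ** cdagger W)) B \<in> zerospanConj"
proof -
  have "rk (\<lambda>A. \<phi> (W ** A ** cdagger W)) B = (\<lambda>A. if A \<in> tlherm then rk \<phi> B (W ** A ** cdagger W) else 0)"
    using tlherm_conj[OF assms(2)] by (auto simp: rk_def fun_eq_iff)
  then show ?thesis using Z_right[OF assms] by simp
qed

lemma rk_scale:
  assumes "rk \<phi> B \<in> zerospanConj"
  shows "rk (\<lambda>A. c * \<phi> A) B \<in> zerospanConj"
proof -
  have "rk (\<lambda>A. c * \<phi> A) B = (\<lambda>A. c *\<^sub>R rk \<phi> B A)"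
    by (auto simp: rk_def fun_eq_iff)
  then show ?thesis using Z_scale[OF assms] by simp
qed

lemma rk_scale2:
  assumes "rk \<phi> B \<in> zerospanConj"
  shows "rk \<phi> (c *\<^sub>R B) \<in> zerospanConj"
proof -
  have "rk \<phi> (c *\<^sub>R B) = (\<lambda>A. c *\<^sub>R rk \<phi> B A)"
    by (auto simp: rk_def fun_eq_iff)
  then show ?thesis using Z_scale[OF assms] by simp
qed



definition gm :: "('d \<Rightarrow> 'd) \<Rightarrow> ('d \<Rightarrow> complex) \<Rightarrow> complex^'d^'d" where
  "gm t f = (\<chi> i j. if i = t j then f j else 0)"

lemma delta2: "(\<Sum>k\<in>UNIV. \<Sum>l\<in>UNIV. (if k = p then c else 0) * A k l * cnj (if l = q then d else 0)) = c * A p q * cnj (d::complex)"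
  for A :: "'d::finite \<Rightarrow> 'd \<Rightarrow> complex"
proof -
  have "(\<Sum>k\<in>UNIV. \<Sum>l\<in>UNIV. (if k = p then c else 0) * A k l * cnj (if l = q then d else 0))
      = (\<Sum>k\<in>UNIV. if k = p then (\<Sum>l\<in>UNIV. c * A k l * cnj (if l = q then d else 0)) else 0)"
    by (rule sum.cong) auto
  also have "\<dots> = (\<Sum>l\<in>UNIV. c * A p l * cnj (if l = q then d else 0))" by simp
  also have "\<dots> = (\<Sum>l\<in>UNIV. if l = q then c * A p l * cnj d else 0)"
    by (rule sum.cong) auto
  also have "\<dots> = c * A p q * cnj d" by simp
  finally show ?thesis .
qed

lemma gm_conj:
  assumes t: "\<And>x. t (t x) = x"
  shows "gm t f ** A ** cdagger (gm t f) = (\<chi> i j. f (t i) * A$(t i)$(t j) * cnj (f (t j)))"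
proof -
  have r1: "(if i = t k then f k else 0) = (if k = t i then f (t i) else 0)" for i k
    using t by auto
  show ?thesis
    unfolding vec_eq_iff conj_entry gm_def vec_lambda_beta r1 delta2 by simp
qed

lemma delta1: "(\<Sum>k\<in>UNIV. (if k = p then c else 0) * cnj (if k = q then d else 0)) = (if p = q then c * cnj (d::complex) else 0)"
  for p :: "'d::finite"
proof -
  have "(\<Sum>k\<in>UNIV. (if k = p then c else 0) * cnj (if k = q then d else 0)) =
     (\<Sum>k\<in>UNIV. if k = p then c * cnj (if k = q then d else 0) else 0)"
    by (rule sum.cong) auto
  then show ?thesis by simp
qed

lemma delta1b: "(\<Sum>k\<in>UNIV. cnj (if k = p then c else 0) * (if k = q then d else 0)) = (if p = q then cnj c * (d::complex) else 0)"
  for p :: "'d::finite"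
proof -
  have "(\<Sum>k\<in>UNIV. cnj (if k = p then c else 0) * (if k = q then d else 0)) =
     (\<Sum>k\<in>UNIV. if k = p then cnj c * (if k = q then d else 0) else 0)"
    by (rule sum.cong) auto
  then show ?thesis by simp
qed

lemma gm_unitary:
  assumes t: "\<And>x. t (t x) = x" and f: "\<And>x. f x * cnj (f x) = 1"
  shows "unitary_mat (gm t f)"
proof -
  have r1: "(if i = t k then f k else 0) = (if k = t i then f (t i) else 0)" for i k
    using t by auto
  have e2: "(t i = t j) \<longleftrightarrow> (i = j)" for i j by (metis t)
  have f2: "cnj (f x) * f x = 1" for x using f[of x] by (simp add: mult.commute)
  have 1: "gm t f ** cdagger (gm t f) = mat 1"
    unfolding vec_eq_iff matrix_matrix_mult_def gm_def mat_def cdagger_def vec_lambda_beta r1 delta1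
    by (simp add: e2 f)
  have 2: "cdagger (gm t f) ** gm t f = mat 1"
    unfolding vec_eq_iff matrix_matrix_mult_def gm_def mat_def cdagger_def vec_lambda_beta delta1b
    by (simp add: e2 f2)
  show ?thesis unfolding unitary_mat_def using 1 2 by simp
qed

definition sw :: "'d \<Rightarrow> 'd \<Rightarrow> 'd \<Rightarrow> 'd" where
  "sw a b x = (if x = a then b else if x = b then a else x)"

lemma sw_inv[simp]: "sw a b (sw a b x) = x"
  by (simp add: sw_def)

definition sg :: "'d set \<Rightarrow> 'd \<Rightarrow> complex" where
  "sg S x = (if x \<in> S then -1 else 1)"

lemma sg_unit: "sg S x * cnj (sg S x) = 1"
  by (simp add: sg_def)

definition Gm :: "'d \<Rightarrow> 'd \<Rightarrow> complex^'d^'d" where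
  "Gm a b = (\<chi> i j. if (i = a \<and> j = b) \<or> (i = b \<and> j = a) then 1 else 0)"

lemma sum8: "(\<Sum>i<(8::nat). g i) = g 0 + g 1 + g 2 + g 3 + g 4 + g 5 + g 6 + (g 7 :: 'a::comm_monoid_add)"
  by (simp add: numeral_eq_Suc lessThan_Suc add_ac)

lemma T0:
  fixes a b :: "'d::finite"
  assumes ab: "a \<noteq> b"
  shows "rk (\<lambda>A. Re (A$a$b)) (Gm a b) \<in> zerospanConj"
proof -
  define Us where "Us = [gm id (sg {}), gm id (sg {a}), gm id (sg {b}), gm id (sg {a,b}),
     gm (sw a b) (sg {}), gm (sw a b) (sg {a}), gm (sw a b) (sg {b}), gm (sw a b) (sg {a,b})]"
  define ls :: "real list" where "ls = [1,-1,-1,1,1,-1,-1,1]"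
  show ?thesis
  proof (rule zs_intro[where n=8 and lam="\<lambda>i. ls ! i / 8" and U="\<lambda>i. Us ! i"])
    have u: "unitary_mat (gm t (sg S))" if "t = id \<or> t = sw a b" for t S
      using that by (auto intro!: gm_unitary sg_unit)
    show "\<forall>i<8. unitary_mat (Us ! i)"
      by (auto simp: Us_def less_Suc_eq numeral_eq_Suc intro: u)
    show "(\<Sum>i<8. ls ! i / 8) = 0" by (simp add: sum8 ls_def)
    show "rk (\<lambda>A. Re (A$a$b)) (Gm a b) A = 0" if "A \<notin> tlherm" for A
      using that by (simp add: rk_def)
    fix A :: "complex^'d^'d"
    assume A: "A \<in> tlherm"
    have h: "A$b$a = cnj (A$a$b)" by (rule herm_entry[OF A])
    show "rk (\<lambda>A. Re (A$a$b)) (Gm a b) A = (\<Sum>i<8. (ls ! i / 8) *\<^sub>R (Us ! i ** A ** cdagger (Us ! i)))"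
      unfolding sum8
      apply (simp add: Us_def ls_def gm_conj rk_def A)
      apply (simp add: vec_eq_iff Gm_def sw_def sg_def ab h)
      apply (simp add: complex_eq_iff scaleR_conv_of_real ab[symmetric])
      done
  qed
qed

lemma sw_eq: "(sw p q i = x) \<longleftrightarrow> (i = sw p q x)"
  by (auto simp: sw_def)

lemma gm_sw_unitary: "unitary_mat (gm (sw p q) (sg {}))"
  by (rule gm_unitary) (auto simp: sg_unit)

lemma Gm_move1:
  assumes "rk \<phi> (Gm a b) \<in> zerospanConj"
  shows "rk \<phi> (Gm (sw p q a) (sw p q b)) \<in> zerospanConj"
proof -
  have "gm (sw p q) (sg {}) ** Gm a b ** cdagger (gm (sw p q) (sg {})) = Gm (sw p q a) (sw p q b)"
    by (simp add: gm_conj Gm_def sg_def sw_eq vec_eq_iff)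
  then show ?thesis using rk_left[OF assms gm_sw_unitary, of p q] by simp
qed

lemma Gm_move:
  assumes "rk \<phi> (Gm a b) \<in> zerospanConj" "a \<noteq> b" "c \<noteq> d"
  shows "rk \<phi> (Gm c d) \<in> zerospanConj"
proof -
  define b' where "b' = sw a c b"
  have 1: "rk \<phi> (Gm c b') \<in> zerospanConj"
    using Gm_move1[OF assms(1), of a c] by (simp add: b'_def sw_def)
  have "c \<noteq> b'" using assms(2) by (auto simp: b'_def sw_def)
  then have "sw b' d c = c" "sw b' d b' = d" using assms(3) by (auto simp: sw_def)
  then show ?thesis using Gm_move1[OF 1, of b' d] by simp
qed

definition Hm :: "'d \<Rightarrow> 'd \<Rightarrow> complex^'d^'d" where
  "Hm a b = (\<chi> i j. if i = a \<and> j = b then \<i> else if i = b \<and> j = a then -\<i> else 0)"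

definition Dm :: "'d \<Rightarrow> 'd \<Rightarrow> complex^'d^'d" where
  "Dm a b = (\<chi> i j. if i = j \<and> i = a then 1 else if i = j \<and> i = b then -1 else 0)"

definition ph :: "'d \<Rightarrow> complex \<Rightarrow> 'd \<Rightarrow> complex" where
  "ph c z x = (if x = c then z else 1)"

lemma ph_unitary: "z * cnj z = 1 \<Longrightarrow> unitary_mat (gm id (ph c z))"
  by (rule gm_unitary) (auto simp: ph_def)

lemma Gm_to_Hm:
  fixes c d :: "'d::finite"
  assumes "rk \<phi> (Gm c d) \<in> zerospanConj" "c \<noteq> d"
  shows "rk \<phi> (Hm c d) \<in> zerospanConj"
proof -
  have "gm id (ph c \<i>) ** Gm c d ** cdagger (gm id (ph c \<i>)) = Hm c d"
    using assms(2) by (auto simp: gm_conj Gm_def Hm_def ph_def vec_eq_iff)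
  then show ?thesis using rk_left[OF assms(1) ph_unitary[of \<i> c]] by simp
qed

lemma phase_functional:
  fixes a b :: "'d::finite"
  assumes "rk (\<lambda>A. Re (A$a$b)) B \<in> zerospanConj" "a \<noteq> b"
  shows "rk (\<lambda>A. Im (A$a$b)) B \<in> zerospanConj"
proof -
  have "(\<lambda>A. Re ((gm id (ph a (-\<i>)) ** A ** cdagger (gm id (ph a (-\<i>))))$a$b)) = (\<lambda>A. Im (A$a$b))"
    using assms(2) by (auto simp: gm_conj ph_def fun_eq_iff)
  then show ?thesis using rk_right[OF assms(1) ph_unitary[of "-\<i>" a]] by simp
qed

definition hs :: complex where "hs = of_real (sqrt (1/2))"

lemma hs_sq: "hs * hs = 1/2"
proof -
  have "hs * hs = of_real (sqrt (1/2) * sqrt (1/2))" by (simp only: hs_def of_real_mult)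
  also have "sqrt (1/2) * sqrt (1/2) = (1/2::real)" by simp
  finally show ?thesis by (simp only:) simp
qed

lemma hs2: "hs * (2 * hs) = 1"
  by (simp only: mult.left_commute[of hs 2 hs] hs_sq) simp

lemma hs_cnj[simp]: "cnj hs = hs" by (simp add: hs_def)

definition Wm :: "'d \<Rightarrow> 'd \<Rightarrow> complex^'d^'d" where
  "Wm a b = (\<chi> i j. if i = a then (if j = a \<or> j = b then hs else 0)
      else if i = b then (if j = a then hs else if j = b then -hs else 0)
      else (if i = j then 1 else 0))"

definition hw :: "'d \<Rightarrow> 'd \<Rightarrow> ('d \<Rightarrow> complex) \<Rightarrow> 'd \<Rightarrow> complex" where
  "hw a b g i = (if i = a then hs * (g a + g b) else if i = b then hs * (g a - g b) else g i)"

lemma sum2: "a \<noteq> b \<Longrightarrow> (\<Sum>k\<in>UNIV. (if k = a then u else if k = b then v else 0) * g k) = u * g a + v * (g b :: complex)"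
  for a :: "'d::finite"
proof -
  assume ab: "a \<noteq> b"
  have "(\<Sum>k\<in>UNIV. (if k = a then u else if k = b then v else 0) * g k)
     = (\<Sum>k\<in>UNIV. (if k = a then u * g a else 0) + (if k = b then v * g b else 0))"
    using ab by (intro sum.cong) auto
  also have "\<dots> = u * g a + v * g b" by (simp add: sum.distrib)
  finally show ?thesis .
qed

lemma Wm_row:
  fixes a b :: "'d::finite"
  assumes ab: "a \<noteq> b"
  shows "(\<Sum>k\<in>UNIV. Wm a b $ i $ k * g k) = hw a b g i"
proof -
  consider "i = a" | "i = b" | "i \<noteq> a" "i \<noteq> b" by blast
  then show ?thesis
  proof cases
    case 1
    have "(\<Sum>k\<in>UNIV. Wm a b $ i $ k * g k) = (\<Sum>k\<in>UNIV. (if k = a then hs else if k = b then hs else 0) * g k)"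
      using 1 ab by (intro sum.cong) (auto simp: Wm_def)
    then show ?thesis using 1 ab sum2[OF ab, of hs hs g] by (simp add: hw_def algebra_simps)
  next
    case 2
    have "(\<Sum>k\<in>UNIV. Wm a b $ i $ k * g k) = (\<Sum>k\<in>UNIV. (if k = a then hs else if k = b then -hs else 0) * g k)"
      using 2 ab by (intro sum.cong) (auto simp: Wm_def)
    then show ?thesis using 2 ab sum2[OF ab, of hs "-hs" g] by (simp add: hw_def algebra_simps)
  next
    case 3
    have "(\<Sum>k\<in>UNIV. Wm a b $ i $ k * g k) = (\<Sum>k\<in>UNIV. if k = i then g i else 0)"
      using 3 ab by (intro sum.cong) (auto simp: Wm_def)
    then show ?thesis using 3 ab by (simp add: hw_def)
  qed
qed

lemma Wm_sym: "Wm a b $ j $ k = Wm a b $ k $ j"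
  by (auto simp: Wm_def)

lemma Wm_cnj: "cnj (Wm a b $ j $ k) = Wm a b $ j $ k"
  by (auto simp: Wm_def)

lemma Wm_conj:
  fixes a b :: "'d::finite"
  assumes ab: "a \<noteq> b"
  shows "(Wm a b ** X ** cdagger (Wm a b)) $ i $ j = hw a b (\<lambda>l. hw a b (\<lambda>k. X$k$l) i) j"
proof -
  have 1: "(Wm a b ** X) $ i $ l = hw a b (\<lambda>k. X$k$l) i" for l
    using Wm_row[OF ab] by (simp add: matrix_matrix_mult_def)
  have "(Wm a b ** X ** cdagger (Wm a b)) $ i $ j = (\<Sum>l\<in>UNIV. Wm a b $ j $ l * (Wm a b ** X) $ i $ l)"
    by (simp add: matrix_matrix_mult_def Wm_cnj mult.commute)
  also have "\<dots> = hw a b (\<lambda>l. (Wm a b ** X) $ i $ l) j" by (rule Wm_row[OF ab])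
  finally show ?thesis by (simp add: 1)
qed

lemma Wm_unitary:
  fixes a b :: "'d::finite"
  assumes ab: "a \<noteq> b"
  shows "unitary_mat (Wm a b)"
proof -
  have cd: "cdagger (Wm a b) = Wm a b"
    by (simp add: vec_eq_iff Wm_cnj Wm_sym)
  have "Wm a b ** Wm a b = mat 1"
  proof -
    have "(Wm a b ** Wm a b) $ i $ j = mat 1 $ i $ j" for i j
    proof -
      have "(Wm a b ** Wm a b) $ i $ j = hw a b (\<lambda>k. Wm a b $ k $ j) i"
        using Wm_row[OF ab] by (simp add: matrix_matrix_mult_def)
      also have "\<dots> = mat 1 $ i $ j"
        using ab hs_sq by (auto simp: hw_def Wm_def mat_def algebra_simps)
      finally show ?thesis .
    qed
    then show ?thesis by (simp add: vec_eq_iff)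
  qed
  then show ?thesis by (simp add: unitary_mat_def cd)
qed

lemma rk_cong: "(\<And>A. A \<in> tlherm \<Longrightarrow> \<phi> A = \<psi> A) \<Longrightarrow> rk \<phi> B = rk \<psi> B"
  by (auto simp: rk_def fun_eq_iff)

lemma Gm_to_Dm:
  fixes c d :: "'d::finite"
  assumes "rk \<phi> (Gm c d) \<in> zerospanConj" "c \<noteq> d"
  shows "rk \<phi> (Dm c d) \<in> zerospanConj"
proof -
  have "Wm c d ** Gm c d ** cdagger (Wm c d) = Dm c d"
    unfolding vec_eq_iff Wm_conj[OF assms(2)]
    using assms(2) hs_sq hs2 by (auto simp: hw_def Gm_def Dm_def)
  then show ?thesis using rk_left[OF assms(1) Wm_unitary[OF assms(2)]] by simp
qed

lemma diag_functional:
  fixes a b :: "'d::finite"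
  assumes "rk (\<lambda>A. Re (A$a$b)) B \<in> zerospanConj" "a \<noteq> b"
  shows "rk (\<lambda>A. Re (A$a$a) - Re (A$b$b)) B \<in> zerospanConj"
proof -
  have 1: "rk (\<lambda>A. 2 * Re ((Wm a b ** A ** cdagger (Wm a b))$a$b)) B \<in> zerospanConj"
    using rk_scale[OF rk_right[OF assms(1) Wm_unitary[OF assms(2)]]] by simp
  have "2 * Re ((Wm a b ** A ** cdagger (Wm a b))$a$b) = Re (A$a$a) - Re (A$b$b)" if A: "A \<in> tlherm" for A
  proof -
    have h: "A$b$a = cnj (A$a$b)" by (rule herm_entry[OF A])
    have "(Wm a b ** A ** cdagger (Wm a b))$a$b = (hs * hs) * (A$a$a + A$b$a - A$a$b - A$b$b)"
      unfolding Wm_conj[OF assms(2)] using assms(2) by (simp add: hw_def algebra_simps)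
    then have "(Wm a b ** A ** cdagger (Wm a b))$a$b = (1/2) * (A$a$a + A$b$a - A$a$b - A$b$b)"
      by (simp only: hs_sq)
    then have "2 * Re ((Wm a b ** A ** cdagger (Wm a b))$a$b) = Re (A$a$a + A$b$a - A$a$b - A$b$b)"
      by (simp only:) simp
    then show ?thesis using h by simp
  qed
  then have "rk (\<lambda>A. 2 * Re ((Wm a b ** A ** cdagger (Wm a b))$a$b)) B = rk (\<lambda>A. Re (A$a$a) - Re (A$b$b)) B"
    by (rule rk_cong)
  then show ?thesis using 1 by simp
qed

definition fam :: "'d \<Rightarrow> 'd \<Rightarrow> (complex^'d^'d \<Rightarrow> real) \<Rightarrow> bool" where
  "fam a b \<phi> \<longleftrightarrow> \<phi> = (\<lambda>A. Re (A$a$b)) \<or> \<phi> = (\<lambda>A. Im (A$a$b)) \<or> \<phi> = (\<lambda>A. Re (A$a$a) - Re (A$b$b))"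

lemma all9:
  fixes a b c d :: "'d::finite"
  assumes "a \<noteq> b" "c \<noteq> d" "fam a b \<phi>"
  shows "rk \<phi> (Gm c d) \<in> zerospanConj" "rk \<phi> (Hm c d) \<in> zerospanConj" "rk \<phi> (Dm c d) \<in> zerospanConj"
proof -
  have 0: "rk (\<lambda>A. Re (A$a$b)) (Gm a b) \<in> zerospanConj" by (rule T0[OF assms(1)])
  have 1: "rk \<phi> (Gm a b) \<in> zerospanConj"
    using assms(3) 0 phase_functional[OF 0 assms(1)] diag_functional[OF 0 assms(1)]
    unfolding fam_def by auto
  show g: "rk \<phi> (Gm c d) \<in> zerospanConj" by (rule Gm_move[OF 1 assms(1,2)])
  show "rk \<phi> (Hm c d) \<in> zerospanConj" by (rule Gm_to_Hm[OF g assms(2)])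
  show "rk \<phi> (Dm c d) \<in> zerospanConj" by (rule Gm_to_Dm[OF g assms(2)])
qed

lemma Gm_X: "a \<noteq> b \<Longrightarrow> Gm a b \<in> tlherm"
  by (auto simp: tlherm_def Gm_def vec_eq_iff trace_def intro!: sum.neutral)

lemma Hm_X: "a \<noteq> b \<Longrightarrow> Hm a b \<in> tlherm"
  by (auto simp: tlherm_def Hm_def vec_eq_iff trace_def intro!: sum.neutral)

lemma Dm_X: 
  fixes a b :: "'d::finite"
  shows "a \<noteq> b \<Longrightarrow> Dm a b \<in> tlherm"
proof -
  assume ab: "a \<noteq> b"
  have "trace (Dm a b) = (\<Sum>i\<in>UNIV. (if i = a then 1 else 0) - (if i = b then 1 else 0))"
    unfolding trace_def using ab by (intro sum.cong) (auto simp: Dm_def)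
  also have "\<dots> = 0" by (simp add: sum_subtractf)
  finally show ?thesis using ab by (auto simp: tlherm_def Dm_def vec_eq_iff)
qed

lemma rk_add: "rk \<phi> (B1 + B2) = (\<lambda>A. rk \<phi> B1 A + rk \<phi> B2 A)"
  by (auto simp: rk_def fun_eq_iff scaleR_add_right)

lemma rk_sum: "rk \<phi> (\<Sum>i\<in>I. B i) = (\<lambda>A. \<Sum>i\<in>I. rk \<phi> (B i) A)"
  by (auto simp: rk_def fun_eq_iff scaleR_sum_right)

lemma rk_zero: "rk \<phi> 0 = (\<lambda>A. 0)"
  by (auto simp: rk_def fun_eq_iff)

definition Tm :: "complex^'d^'d \<Rightarrow> 'd \<Rightarrow> 'd \<Rightarrow> complex^'d^'d" where
  "Tm C a b = (if a = b then 0 else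
     (1/2 * Re (C$a$b)) *\<^sub>R Gm a b + (1/2 * Im (C$a$b)) *\<^sub>R Hm a b
     + (1 / (2 * real CARD('d)) * (Re (C$a$a) - Re (C$b$b))) *\<^sub>R Dm a b)"

lemma cscale: "r *\<^sub>R (z::complex) = complex_of_real r * z"
  by (simp add: scaleR_conv_of_real)

lemma sum_if_const: "(\<Sum>b\<in>A. if P then g b else 0) = (if P then (\<Sum>b\<in>A. g b) else 0)"
  by auto

lemma real_diag_sum:
  fixes R :: "'d::finite \<Rightarrow> real"
  shows "(\<Sum>a\<in>UNIV. \<Sum>b\<in>UNIV. (R a - R b) * ((if x = a then 1 else 0) - (if x = b then 1 else 0)))
     = 2 * real CARD('d) * R x - 2 * (\<Sum>a\<in>UNIV. R a)"
proof -
  have p: "(R a - R b) * ((if x = a then 1 else 0) - (if x = b then 1 else 0))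
     = (if a = x then R x - R b else 0) - (if b = x then R a - R x else 0)" for a b
    by auto
  have q: "(\<Sum>a\<in>UNIV. \<Sum>b\<in>UNIV. if a = x then R x - R b else 0) = (\<Sum>b\<in>UNIV. R x - R b)"
    by (subst sum.swap) simp
  have r: "(\<Sum>a\<in>UNIV. \<Sum>b\<in>UNIV. if b = x then R a - R x else 0) = (\<Sum>a\<in>UNIV. R a - R x)"
    by simp
  have "(\<Sum>a\<in>UNIV. \<Sum>b\<in>UNIV. (R a - R b) * ((if x = a then 1 else 0) - (if x = b then 1 else 0)))
     = (\<Sum>a\<in>UNIV. \<Sum>b\<in>UNIV. if a = x then R x - R b else 0) - (\<Sum>a\<in>UNIV. \<Sum>b\<in>UNIV. if b = x then R a - R x else 0)"
    unfolding p by (simp only: sum_subtractf)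
  also have "\<dots> = (\<Sum>b\<in>UNIV. R x - R b) - (\<Sum>a\<in>UNIV. R a - R x)"
    unfolding q r ..
  also have "\<dots> = 2 * real CARD('d) * R x - 2 * (\<Sum>a\<in>UNIV. R a)"
    by (simp add: sum_subtractf)
  finally show ?thesis .
qed

lemma decomp:
  fixes C :: "complex^'d^'d"
  assumes C: "C \<in> tlherm"
  shows "C = (\<Sum>a\<in>UNIV. \<Sum>b\<in>UNIV. Tm C a b)"
proof -
  have "(\<Sum>a\<in>UNIV. \<Sum>b\<in>UNIV. Tm C a b) $ x $ y = C $ x $ y" for x y
  proof (cases "x = y")
    case False
    define u where "u = complex_of_real (1/2 * Re (C$x$y)) + \<i> * complex_of_real (1/2 * Im (C$x$y))"
    define v where "v = complex_of_real (1/2 * Re (C$y$x)) - \<i> * complex_of_real (1/2 * Im (C$y$x))"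
    have e: "(Tm C a b) $ x $ y = (if a = x then (if b = y then u else 0) else 0) + (if a = y then (if b = x then v else 0) else 0)" for a b
      using False by (auto simp: Tm_def Gm_def Hm_def Dm_def u_def v_def cscale)
    have "(\<Sum>a\<in>UNIV. \<Sum>b\<in>UNIV. Tm C a b) $ x $ y = (\<Sum>a\<in>UNIV. \<Sum>b\<in>UNIV. (Tm C a b) $ x $ y)"
      by (simp add: sum_component)
    also have "\<dots> = u + v" unfolding e by (simp add: sum.distrib sum_if_const)
    also have "\<dots> = C $ x $ y"
      using herm_entry[OF C, of y x] by (simp add: u_def v_def complex_eq_iff)
    finally show ?thesis .
  next
    case True
    define R where "R a = Re (C$a$a)" for a
    define k where "k = 1 / (2 * real CARD('d))"
    have e: "(Tm C a b) $ x $ x = complex_of_real (k * ((R a - R b) * ((if x = a then 1 else 0) - (if x = b then 1 else 0))))" for a b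
      by (auto simp: Tm_def Gm_def Hm_def Dm_def R_def k_def cscale diff_divide_distrib)
    have S: "(\<Sum>a\<in>UNIV. R a) = 0"
    proof -
      have "(\<Sum>a\<in>UNIV. R a) = Re (trace C)" by (simp add: R_def trace_def)
      then show ?thesis using C by (simp add: tlherm_def)
    qed
    have "(\<Sum>a\<in>UNIV. \<Sum>b\<in>UNIV. Tm C a b) $ x $ x = (\<Sum>a\<in>UNIV. \<Sum>b\<in>UNIV. (Tm C a b) $ x $ x)"
      by (simp add: sum_component)
    also have "\<dots> = complex_of_real (k * (\<Sum>a\<in>UNIV. \<Sum>b\<in>UNIV. (R a - R b) * ((if x = a then 1 else 0) - (if x = b then 1 else 0))))"
      unfolding e by (simp add: sum_distrib_left)
    also have "\<dots> = complex_of_real (R x)"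
      unfolding real_diag_sum S by (simp add: k_def)
    also have "\<dots> = C $ x $ x"
      using herm_entry[OF C, of x x] by (simp add: R_def complex_eq_iff)
    finally show ?thesis using True by simp
  qed
  then show ?thesis by (simp add: vec_eq_iff)
qed

lemma rk_X:
  fixes a b :: "'d::finite"
  assumes "a \<noteq> b" "fam a b \<phi>" "C \<in> tlherm"
  shows "rk \<phi> C \<in> zerospanConj"
proof -
  have e: "rk \<phi> C = (\<lambda>A. \<Sum>c\<in>UNIV. \<Sum>d\<in>UNIV. rk \<phi> (Tm C c d) A)"
    by (subst decomp[OF assms(3)]) (simp add: rk_sum)
  have "rk \<phi> (Tm C c d) \<in> zerospanConj" for c d
  proof (cases "c = d")
    case True then show ?thesis by (simp add: Tm_def rk_zero Z_zero)
  next
    case False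
    show ?thesis unfolding Tm_def using False
      by (simp add: rk_add Z_add rk_scale2 all9[OF assms(1) False assms(2)])
  qed
  then show ?thesis unfolding e by (intro Z_sum) auto
qed



lemma Tm_X: "Tm C a b \<in> tlherm"
proof (cases "a = b")
  case True then show ?thesis by (simp add: Tm_def tlherm_zero)
next
  case False then show ?thesis unfolding Tm_def
    by (simp add: tlherm_add tlherm_scaleR Gm_X Hm_X Dm_X)
qed

lemma L_add: "L \<in> realLinMaps \<Longrightarrow> A \<in> tlherm \<Longrightarrow> B \<in> tlherm \<Longrightarrow> L (A + B) = L A + L B"
  unfolding realLinMaps_def by blast

lemma L_scale: "L \<in> realLinMaps \<Longrightarrow> A \<in> tlherm \<Longrightarrow> L (c *\<^sub>R A) = c *\<^sub>R L A"
  unfolding realLinMaps_def by blast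

lemma L_zero: "L \<in> realLinMaps \<Longrightarrow> L 0 = 0"
  using L_scale[OF _ tlherm_zero, of L 0] by simp

lemma L_X: "L \<in> realLinMaps \<Longrightarrow> A \<in> tlherm \<Longrightarrow> L A \<in> tlherm"
  unfolding realLinMaps_def by blast

lemma L_out: "L \<in> realLinMaps \<Longrightarrow> A \<notin> tlherm \<Longrightarrow> L A = 0"
  unfolding realLinMaps_def by blast

lemma L_sum: assumes L: "L \<in> realLinMaps" shows "finite I \<Longrightarrow> (\<And>i. i \<in> I \<Longrightarrow> B i \<in> tlherm) \<Longrightarrow> L (sum B I) = (\<Sum>i\<in>I. L (B i))"
proof (induction I rule: finite_induct)
  case empty then show ?case by (simp add: L_zero[OF L])
next
  case (insert x F)
  then show ?case by (simp add: L_add[OF L] tlherm_sum)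
qed

lemma L_Tm:
  fixes a b :: "'d::finite"
  assumes L: "L \<in> realLinMaps" and ab: "a \<noteq> b"
  shows "L (Tm C a b) = (1/2 * Re (C$a$b)) *\<^sub>R L (Gm a b) + (1/2 * Im (C$a$b)) *\<^sub>R L (Hm a b)
     + (1 / (2 * real CARD('d)) * (Re (C$a$a) - Re (C$b$b))) *\<^sub>R L (Dm a b)"
  using ab by (simp add: Tm_def L_add[OF L] L_scale[OF L] tlherm_add tlherm_scaleR Gm_X Hm_X Dm_X)

lemma sub2: "(realLinMaps :: ((complex^'d^'d) \<Rightarrow> (complex^'d^'d)) set) \<subseteq> zerospanConj"
proof
  fix L :: "complex^'d^'d \<Rightarrow> complex^'d^'d"
  assume L: "L \<in> realLinMaps"
  define c where "c = 1 / (2 * real CARD('d))"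
  define F where "F = (\<lambda>A. \<Sum>a\<in>UNIV. \<Sum>b\<in>UNIV. if a = b then 0 else
     rk (\<lambda>A. 1/2 * Re (A$a$b)) (L (Gm a b)) A + rk (\<lambda>A. 1/2 * Im (A$a$b)) (L (Hm a b)) A
     + rk (\<lambda>A. c * (Re (A$a$a) - Re (A$b$b))) (L (Dm a b)) A)"
  have "F \<in> zerospanConj"
    unfolding F_def
  proof (intro Z_sum)
    fix a b :: 'd
    show "(\<lambda>A. if a = b then 0 else
     rk (\<lambda>A. 1/2 * Re (A$a$b)) (L (Gm a b)) A + rk (\<lambda>A. 1/2 * Im (A$a$b)) (L (Hm a b)) A
     + rk (\<lambda>A. c * (Re (A$a$a) - Re (A$b$b))) (L (Dm a b)) A) \<in> zerospanConj"
    proof (cases "a = b")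
      case True then show ?thesis using Z_zero by simp
    next
      case False
      have f: "fam a b (\<lambda>A. Re (A$a$b))" "fam a b (\<lambda>A. Im (A$a$b))" "fam a b (\<lambda>A. Re (A$a$a) - Re (A$b$b))"
        by (auto simp: fam_def)
      have r1: "rk (\<lambda>A. 1/2 * Re (A$a$b)) (L (Gm a b)) \<in> zerospanConj"
        by (rule rk_scale[OF rk_X[OF False f(1) L_X[OF L Gm_X[OF False]]]])
      have r2: "rk (\<lambda>A. 1/2 * Im (A$a$b)) (L (Hm a b)) \<in> zerospanConj"
        by (rule rk_scale[OF rk_X[OF False f(2) L_X[OF L Hm_X[OF False]]]])
      have r3: "rk (\<lambda>A. c * (Re (A$a$a) - Re (A$b$b))) (L (Dm a b)) \<in> zerospanConj"
        by (rule rk_scale[OF rk_X[OF False f(3) L_X[OF L Dm_X[OF False]]]])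
      show ?thesis using False Z_add[OF Z_add[OF r1 r2] r3] by simp
    qed
  qed auto
  moreover have "L = F"
  proof
    fix A
    show "L A = F A"
    proof (cases "A \<in> tlherm")
      case False
      have "F A = 0" unfolding F_def rk_def using False by (intro sum.neutral ballI) simp
      then show ?thesis using L_out[OF L False] by simp
    next
      case True
      have "L A = L (\<Sum>a\<in>UNIV. \<Sum>b\<in>UNIV. Tm A a b)" using decomp[OF True] by simp
      also have "\<dots> = (\<Sum>a\<in>UNIV. \<Sum>b\<in>UNIV. L (Tm A a b))"
        by (simp add: L_sum[OF L] Tm_X tlherm_sum)
      also have "\<dots> = F A"
        unfolding F_def
        apply (intro sum.cong refl)
        subgoal for a b by (cases "a = b") (simp_all add: L_Tm[OF L] rk_def True c_def L_zero[OF L] Tm_def[of _ b b])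
        done
      finally show ?thesis .
    qed
  qed
  ultimately show "L \<in> zerospanConj" by simp
qed

theorem proposition1:
  shows "(zerospanConj :: ((complex^'d^'d) \<Rightarrow> (complex^'d^'d)) set) = realLinMaps"
  using sub1 sub2 by blast

end
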